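(* Let $\beta=1$, $\gamma>2$ and $G\in\mathcal S_{Rob}(\mathbb R^* )$. Then $$\lim_{n\to\infty}\Big\{G_+'(0)\sum_{x=0}^{\infty}G(\tfrac xn)\sum_{r=x+1}^{\infty}r\,p(r)+G_-'(0)\sum_{x=-\infty}^{-1}G(\tfrac xn)\sum_{r=-\infty}^{x}r\,p(r)\Big\}=\frac{\kappa_\gamma}{\hat\alpha}[\nabla_{\beta,\gamma}G(0)]^2,$$ where $\nabla_{\beta,\gamma}G(0)=G_+'(0)$.
   Context: Fix $\gamma>2$ and $\alpha>0$. Let $p(0)=0$, $p(x)=c_\gamma|x|^{-\gamma-1}$ ($x\ne0$), with $c_\gamma$ the constant making $\sum_xp(x)=1$. Let $m=\sum_{x\ge1}xp(x)$, $\sigma^2=\sum_xx^2p(x)$, $\kappa_\gamma=\sigma^2/2$, $\hat\alpha=\alpha m/\kappa_\gamma=2\alpha m/\sigma^2$. $\mathcal S_{Rob}(\mathbb R^* )$ is the space of functions $G=\mathbb 1_{\{u<0\}}G_-+\mathbb 1_{\{u\ge0\}}G_+$ with $G_\pm$ Schwartz functions satisfying $G_-^{(2k+1)}(0)=G_+^{(2k+1)}(0)=\hat\alpha[G_+^{(2k)}(0)-G_-^{(2k)}(0)]$ for all $k\ge0$; $\nabla_{\beta,\gamma}G$ is the piecewise first derivative ($G_-'$ on $(-\infty,0)$, $G_+'$ on $[0,\infty)$). *)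

theory Defs
  imports "HOL-Analysis.Analysis"
begin

definition w_gamma :: "real \<Rightarrow> int \<Rightarrow> real" where
  "w_gamma \<gamma> x = (if x = 0 then 0 else \<bar>real_of_int x\<bar> powr (-\<gamma> - 1))"

definition c_gamma :: "real \<Rightarrow> real" where
  "c_gamma \<gamma> = 1 / (\<Sum>\<^sub>\<infinity>x\<in>(UNIV::int set). w_gamma \<gamma> x)"

definition p_gamma :: "real \<Rightarrow> int \<Rightarrow> real" where
  "p_gamma \<gamma> x = c_gamma \<gamma> * w_gamma \<gamma> x"

definition m_gamma :: "real \<Rightarrow> real" where
  "m_gamma \<gamma> = (\<Sum>\<^sub>\<infinity>x\<in>{1::int..}. real_of_int x * p_gamma \<gamma> x)"

definition sigma2_gamma :: "real \<Rightarrow> real" where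
  "sigma2_gamma \<gamma> = (\<Sum>\<^sub>\<infinity>x\<in>(UNIV::int set). (real_of_int x)^2 * p_gamma \<gamma> x)"

definition kappa_gamma :: "real \<Rightarrow> real" where
  "kappa_gamma \<gamma> = sigma2_gamma \<gamma> / 2"

definition alpha_hat :: "real \<Rightarrow> real \<Rightarrow> real" where
  "alpha_hat \<alpha> \<gamma> = \<alpha> * m_gamma \<gamma> / kappa_gamma \<gamma>"

definition schwartz :: "(real \<Rightarrow> real) \<Rightarrow> bool" where
  "schwartz f \<longleftrightarrow>
     (\<forall>k x. ((deriv ^^ k) f has_real_derivative (deriv ^^ Suc k) f x) (at x)) \<and>
     (\<forall>j k. \<exists>C. \<forall>x. \<bar>x\<bar> ^ j * \<bar>(deriv ^^ k) f x\<bar> \<le> C)"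

text \<open>S_Rob(R^*): pairs (G_-, G_+) of Schwartz functions with the Robin conditions.\<close>
definition S_Rob :: "real \<Rightarrow> (real \<Rightarrow> real) \<Rightarrow> (real \<Rightarrow> real) \<Rightarrow> bool" where
  "S_Rob ah Gm Gp \<longleftrightarrow> schwartz Gm \<and> schwartz Gp \<and>
     (\<forall>k. (deriv ^^ (2*k+1)) Gm 0 = ah * ((deriv ^^ (2*k)) Gp 0 - (deriv ^^ (2*k)) Gm 0) \<and>
          (deriv ^^ (2*k+1)) Gp 0 = ah * ((deriv ^^ (2*k)) Gp 0 - (deriv ^^ (2*k)) Gm 0))"

definition glue :: "(real \<Rightarrow> real) \<Rightarrow> (real \<Rightarrow> real) \<Rightarrow> real \<Rightarrow> real" where
  "glue Gm Gp u = (if u < 0 then Gm u else Gp u)"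

end

theory Submission
  imports Defs
begin

lemma dom_lim:
  fixes T :: "'a \<Rightarrow> real" and H :: "real \<Rightarrow> real" and a :: "nat \<Rightarrow> 'a \<Rightarrow> real"
  assumes Ts: "T summable_on A" and Tn: "\<And>y. y\<in>A \<Longrightarrow> T y \<ge> 0"
    and Bd: "\<And>u. \<bar>H u\<bar> \<le> B" and cont: "isCont H 0" and a: "\<And>y. (\<lambda>n. a n y) \<longlonglongrightarrow> 0"
  shows "(\<lambda>n. \<Sum>\<^sub>\<infinity>y\<in>A. H (a n y) * T y) \<longlonglongrightarrow> H 0 * (\<Sum>\<^sub>\<infinity>y\<in>A. T y)"
proof -
  have "(\<lambda>y. norm (T y)) summable_on A"
    using Ts by (rule summable_on_cong[THEN iffD1, rotated]) (simp add: Tn)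
  hence "Infinite_Set_Sum.abs_summable_on T A"
    using abs_summable_equivalent by blast
  hence iT: "integrable (count_space A) T"
    by (simp add: Infinite_Set_Sum.abs_summable_on_def)
  have iw: "integrable (count_space A) (\<lambda>y. B * T y)"
    using iT by simp
  have lim: "AE y in count_space A. (\<lambda>n. H (a n y) * T y) \<longlonglongrightarrow> H 0 * T y"
  proof (rule AE_I2)
    fix y
    have "(\<lambda>n. H (a n y)) \<longlonglongrightarrow> H 0"
      using cont a[of y] by (rule isCont_tendsto_compose)
    thus "(\<lambda>n. H (a n y) * T y) \<longlonglongrightarrow> H 0 * T y"
      by (intro tendsto_intros)
  qed
  have bnd: "AE y in count_space A. norm (H (a n y) * T y) \<le> B * T y" for n
    unfolding AE_count_space
  proof
    fix y assume "y \<in> A"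
    hence "T y \<ge> 0" by (rule Tn)
    thus "norm (H (a n y) * T y) \<le> B * T y"
      using Bd[of "a n y"] by (simp add: abs_mult mult_right_mono)
  qed
  have DC1: "integrable (count_space A) (\<lambda>y. H 0 * T y)"
    using iT by simp
  have DC2: "integrable (count_space A) (\<lambda>y. H (a n y) * T y)" for n
    by (rule integrable_dominated_convergence2[OF _ _ iw lim bnd]) auto
  have DC3: "(\<lambda>n. integral\<^sup>L (count_space A) (\<lambda>y. H (a n y) * T y)) \<longlonglongrightarrow> integral\<^sup>L (count_space A) (\<lambda>y. H 0 * T y)"
    by (rule integral_dominated_convergence[OF _ _ iw lim bnd]) auto
  have conv: "integral\<^sup>L (count_space A) g = infsum g A" if "integrable (count_space A) g" for g :: "'a \<Rightarrow> real"
    using that infsetsum_infsum[of g A] by (simp add: infsetsum_def Infinite_Set_Sum.abs_summable_on_def)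
  show ?thesis
    using DC3 unfolding conv[OF DC1] conv[OF DC2] by (simp add: infsum_cmult_right')
qed


lemma pow_summ:
  assumes "s < -1"
  shows "(\<lambda>r::int. real_of_int r powr s) summable_on {0..}"
proof -
  have "summable (\<lambda>n. real n powr s)"
    using assms by (simp add: summable_real_powr_iff)
  hence "(\<lambda>n. real n powr s) summable_on UNIV"
    by (subst summable_on_UNIV_nonneg_real_iff) auto
  hence "((\<lambda>r::int. real_of_int r powr s) \<circ> int) summable_on UNIV"
    by (simp add: o_def)
  hence "(\<lambda>r::int. real_of_int r powr s) summable_on (int ` UNIV)"
    by (subst summable_on_reindex) auto
  moreover have "int ` UNIV = {0..}"
    by (auto simp: image_iff intro!: exI[of _ "nat _"])
  ultimately show ?thesis by simp
qed

lemma p_pos: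
  assumes "r \<noteq> 0"
  shows "p_gamma g r = c_gamma g * \<bar>real_of_int r\<bar> powr (-g-1)"
  using assms by (simp add: p_gamma_def w_gamma_def)

lemma p_zero: "p_gamma g 0 = 0"
  by (simp add: p_gamma_def w_gamma_def)

lemma p_sym: "p_gamma g (-r) = p_gamma g r"
  by (simp add: p_gamma_def w_gamma_def)

lemma q_eq:
  assumes "r \<ge> 1"
  shows "real_of_int r * p_gamma g r = c_gamma g * real_of_int r powr (-g)"
proof -
  have rp: "real_of_int r > 0" using assms by simp
  have "real_of_int r * real_of_int r powr (-g-1) = real_of_int r powr 1 * real_of_int r powr (-g-1)"
    using rp by simp
  also have "\<dots> = real_of_int r powr (-g)"
    by (subst powr_add[symmetric]) simp
  finally show ?thesis using assms rp by (simp add: p_pos)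
qed

lemma rq_eq:
  assumes "r \<ge> 1"
  shows "real_of_int r * (real_of_int r * p_gamma g r) = c_gamma g * real_of_int r powr (1-g)"
proof -
  have rp: "real_of_int r > 0" using assms by simp
  have "real_of_int r * real_of_int r powr (-g) = real_of_int r powr 1 * real_of_int r powr (-g)"
    using rp by simp
  also have "\<dots> = real_of_int r powr (1-g)"
    by (subst powr_add[symmetric]) simp
  finally show ?thesis using assms rp by (simp add: q_eq)
qed

lemma q_summ:
  assumes "g > 1" and "y \<ge> 0"
  shows "(\<lambda>r. real_of_int r * p_gamma g r) summable_on {y+1..}"
proof -
  have "(\<lambda>r::int. real_of_int r powr (-g)) summable_on {0..}"
    using assms by (intro pow_summ) auto
  hence "(\<lambda>r::int. c_gamma g * real_of_int r powr (-g)) summable_on {y+1..}"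
    by (rule summable_on_subset_banach[OF summable_on_cmult_right]) (use assms in auto)
  thus ?thesis
    by (rule summable_on_cong[THEN iffD1, rotated]) (use assms in \<open>auto simp: q_eq\<close>)
qed

lemma rq_summ:
  assumes "g > 2"
  shows "(\<lambda>r. real_of_int r * (real_of_int r * p_gamma g r)) summable_on {1..}"
proof -
  have "(\<lambda>r::int. real_of_int r powr (1-g)) summable_on {0..}"
    using assms by (intro pow_summ) auto
  hence "(\<lambda>r::int. c_gamma g * real_of_int r powr (1-g)) summable_on {1..}"
    by (rule summable_on_subset_banach[OF summable_on_cmult_right]) auto
  thus ?thesis
    by (rule summable_on_cong[THEN iffD1, rotated]) (auto simp: rq_eq)
qed


lemma c_nonneg: "c_gamma g \<ge> 0"
  unfolding c_gamma_def by (simp add: infsum_nonneg w_gamma_def)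

lemma q_nonneg: "real_of_int r * p_gamma g r \<ge> 0" if "r \<ge> 0"
  using that c_nonneg[of g] by (simp add: p_gamma_def w_gamma_def)

lemma fub:
  assumes "g > 2"
  shows "(\<lambda>y. \<Sum>\<^sub>\<infinity>r\<in>{y+1..}. real_of_int r * p_gamma g r) summable_on {0..}"
    and "(\<Sum>\<^sub>\<infinity>y\<in>{0..}. \<Sum>\<^sub>\<infinity>r\<in>{y+1..}. real_of_int r * p_gamma g r)
         = (\<Sum>\<^sub>\<infinity>r\<in>{1..}. real_of_int r * (real_of_int r * p_gamma g r))"
proof -
  define q where "q r = real_of_int r * p_gamma g r" for r
  define S' where "S' = Sigma {1::int..} (\<lambda>r. {0..r-1})"
  define S where "S = Sigma {0::int..} (\<lambda>y. {y+1..})"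
  have qn: "r \<ge> 0 \<Longrightarrow> q r \<ge> 0" for r unfolding q_def by (rule q_nonneg)
  have slice: "(\<Sum>\<^sub>\<infinity>y\<in>{0..r-1}. norm (q r)) = real_of_int r * q r" if "r \<ge> 1" for r
    using that qn[of r] by simp
  have "(\<lambda>x. norm ((\<lambda>(r,y). q r) x)) summable_on S'"
    unfolding S'_def
  proof (rule Infinite_Sum.abs_summable_on_Sigma_iff[THEN iffD2], intro conjI ballI)
    show "(\<lambda>y. norm (case (r, y) of (r, y) \<Rightarrow> q r)) summable_on {0..r - 1}" for r
      by simp
    have "(\<lambda>r. real_of_int r * q r) summable_on {1..}"
      using rq_summ[OF assms] by (simp add: q_def)
    hence "(\<lambda>r. \<Sum>\<^sub>\<infinity>y\<in>{0..r-1}. norm (q r)) summable_on {1..}"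
      by (rule summable_on_cong[THEN iffD1, rotated]) (simp add: slice qn)
    thus "(\<lambda>r. norm (\<Sum>\<^sub>\<infinity>y\<in>{0..r - 1}. norm (case (r, y) of (r, y) \<Rightarrow> q r))) summable_on {1..}"
      by (rule summable_on_cong[THEN iffD1, rotated]) (simp add: infsum_nonneg)
  qed
  hence s1: "(\<lambda>(r,y). q r) summable_on S'"
    using abs_summable_summable by blast
  have SS: "S = prod.swap ` S'"
    unfolding S_def S'_def by (auto simp: image_iff)
  have s2: "(\<lambda>(y,r). q r) summable_on S"
    unfolding SS by (subst summable_on_reindex) (use s1 in \<open>auto simp: o_def case_prod_unfold\<close>)
  show "(\<lambda>y. \<Sum>\<^sub>\<infinity>r\<in>{y+1..}. real_of_int r * p_gamma g r) summable_on {0..}"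
    using summable_on_Sigma_banach[of "\<lambda>y r. q r" "{0..}" "\<lambda>y. {y+1..}"] s2
    unfolding S_def q_def by simp
  have "(\<Sum>\<^sub>\<infinity>y\<in>{0..}. \<Sum>\<^sub>\<infinity>r\<in>{y+1..}. q r) = (\<Sum>\<^sub>\<infinity>(y,r)\<in>S. q r)"
    using infsum_Sigma'_banach[of "\<lambda>y r. q r" "{0..}" "\<lambda>y. {y+1..}"] s2
    unfolding S_def by simp
  also have "\<dots> = (\<Sum>\<^sub>\<infinity>(r,y)\<in>S'. q r)"
    unfolding SS by (subst infsum_reindex) (auto simp: o_def case_prod_unfold)
  also have "\<dots> = (\<Sum>\<^sub>\<infinity>r\<in>{1..}. \<Sum>\<^sub>\<infinity>y\<in>{0..r-1}. q r)"
    using infsum_Sigma'_banach[of "\<lambda>r y. q r" "{1..}" "\<lambda>r. {0..r-1}"] s1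
    unfolding S'_def by simp
  also have "\<dots> = (\<Sum>\<^sub>\<infinity>r\<in>{1..}. real_of_int r * q r)"
    by (rule infsum_cong) simp
  finally show "(\<Sum>\<^sub>\<infinity>y\<in>{0..}. \<Sum>\<^sub>\<infinity>r\<in>{y+1..}. real_of_int r * p_gamma g r)
         = (\<Sum>\<^sub>\<infinity>r\<in>{1..}. real_of_int r * (real_of_int r * p_gamma g r))"
    unfolding q_def .
qed


lemma kappa_eq:
  assumes "g > 2"
  shows "kappa_gamma g = (\<Sum>\<^sub>\<infinity>r\<in>{1..}. real_of_int r * (real_of_int r * p_gamma g r))"
proof -
  define h where "h r = (real_of_int r)^2 * p_gamma g r" for r
  define M where "M = (\<Sum>\<^sub>\<infinity>r\<in>{1::int..}. real_of_int r * (real_of_int r * p_gamma g r))"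
  have h1: "(h has_sum M) {1..}"
    unfolding M_def h_def using rq_summ[OF assms]
    by (simp add: power2_eq_square mult.assoc has_sum_infsum)
  have "((h \<circ> uminus) has_sum M) {1..}"
  proof -
    have "h \<circ> uminus = h" by (auto simp: h_def p_sym)
    thus ?thesis using h1 by simp
  qed
  hence h2: "(h has_sum M) (uminus ` {1..})"
    by (subst has_sum_reindex) auto
  have "(h has_sum (M + M)) ({1..} \<union> uminus ` {1..})"
    by (rule has_sum_Un_disjoint[OF h1 h2]) auto
  hence hU: "(h has_sum (M + M)) UNIV"
    by (rule has_sum_cong_neutral[THEN iffD1, rotated -1])
       (auto simp: h_def p_zero image_iff intro!: exI[of _ "- _"])
  have "sigma2_gamma g = M + M"
    unfolding sigma2_gamma_def using infsumI[OF hU] by (simp add: h_def[abs_def])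
  thus ?thesis unfolding kappa_gamma_def M_def by simp
qed


lemma neg_tail:
  "(\<Sum>\<^sub>\<infinity>r\<in>{..x}. real_of_int r * p_gamma g r) = - (\<Sum>\<^sub>\<infinity>r\<in>{(-x-1)+1..}. real_of_int r * p_gamma g r)"
proof -
  have e: "{..x} = uminus ` {-x..}"
    by (auto simp: image_iff intro!: exI[of _ "- _"])
  have "(\<Sum>\<^sub>\<infinity>r\<in>{..x}. real_of_int r * p_gamma g r) = (\<Sum>\<^sub>\<infinity>r\<in>{-x..}. - (real_of_int r * p_gamma g r))"
    unfolding e by (subst infsum_reindex) (auto simp: o_def p_sym)
  also have "\<dots> = - (\<Sum>\<^sub>\<infinity>r\<in>{-x..}. real_of_int r * p_gamma g r)"
    by (rule infsum_uminus)
  finally show ?thesis by simp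
qed

lemma sch:
  assumes "schwartz f"
  shows "isCont f 0" and "\<exists>C. \<forall>x. \<bar>f x\<bar> \<le> C"
proof -
  from assms have "((deriv ^^ 0) f has_real_derivative (deriv ^^ Suc 0) f 0) (at 0)"
    unfolding schwartz_def by blast
  thus "isCont f 0" by (auto dest: DERIV_isCont)
  from assms obtain C where "\<forall>x. \<bar>x\<bar> ^ 0 * \<bar>(deriv ^^ 0) f x\<bar> \<le> C"
    unfolding schwartz_def by blast
  thus "\<exists>C. \<forall>x. \<bar>f x\<bar> \<le> C" by auto
qed

theorem lemmaA4:
  fixes \<alpha> \<gamma> :: real and Gm Gp :: "real \<Rightarrow> real"
  assumes "\<gamma> > 2" and "\<alpha> > 0"
    and "S_Rob (alpha_hat \<alpha> \<gamma>) Gm Gp"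
  shows "(\<lambda>n::nat.
      deriv Gp 0 * (\<Sum>\<^sub>\<infinity>x\<in>{0::int..}. glue Gm Gp (real_of_int x / real n) *
          (\<Sum>\<^sub>\<infinity>r\<in>{x+1..}. real_of_int r * p_gamma \<gamma> r))
    + deriv Gm 0 * (\<Sum>\<^sub>\<infinity>x\<in>{..(-1::int)}. glue Gm Gp (real_of_int x / real n) *
          (\<Sum>\<^sub>\<infinity>r\<in>{..x}. real_of_int r * p_gamma \<gamma> r)))
    \<longlonglongrightarrow> kappa_gamma \<gamma> / alpha_hat \<alpha> \<gamma> * (deriv Gp 0)^2"
proof -
  define T where "T y = (\<Sum>\<^sub>\<infinity>r\<in>{y+1..}. real_of_int r * p_gamma \<gamma> r)" for y
  define M where "M = (\<Sum>\<^sub>\<infinity>r\<in>{1::int..}. real_of_int r * (real_of_int r * p_gamma \<gamma> r))"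
  define ah where "ah = alpha_hat \<alpha> \<gamma>"
  have kM: "kappa_gamma \<gamma> = M" unfolding M_def by (rule kappa_eq[OF assms(1)])
  have Ts: "T summable_on {0..}" unfolding T_def by (rule fub(1)[OF assms(1)])
  have TM: "(\<Sum>\<^sub>\<infinity>y\<in>{0..}. T y) = M" unfolding T_def M_def by (rule fub(2)[OF assms(1)])
  have Tn: "T y \<ge> 0" if "y \<in> {0..}" for y
    unfolding T_def by (rule infsum_nonneg) (use that in \<open>auto intro: q_nonneg\<close>)
  have SR: "schwartz Gm" "schwartz Gp"
    and rob: "deriv Gm 0 = ah * (Gp 0 - Gm 0)" "deriv Gp 0 = ah * (Gp 0 - Gm 0)"
    using assms(3)[unfolded S_Rob_def] unfolding ah_def
    by (auto dest: spec[of _ 0])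
  obtain Cp where Cp: "\<And>x. \<bar>Gp x\<bar> \<le> Cp" using sch(2)[OF SR(2)] by blast
  obtain Cm where Cm: "\<And>x. \<bar>Gm x\<bar> \<le> Cm" using sch(2)[OF SR(1)] by blast
  have L1: "(\<lambda>n. \<Sum>\<^sub>\<infinity>y\<in>{0..}. Gp (real_of_int y / real n) * T y) \<longlonglongrightarrow> Gp 0 * M"
    using dom_lim[OF Ts Tn Cp sch(1)[OF SR(2)], of "\<lambda>n y. real_of_int y / real n"]
    by (simp add: TM lim_const_over_n)
  have L2: "(\<lambda>n. \<Sum>\<^sub>\<infinity>y\<in>{0..}. Gm ((- real_of_int y - 1) / real n) * T y) \<longlonglongrightarrow> Gm 0 * M"
    using dom_lim[OF Ts Tn Cm sch(1)[OF SR(1)], of "\<lambda>n y. (- real_of_int y - 1) / real n"]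
    by (simp add: TM lim_const_over_n)
  have E1: "(\<Sum>\<^sub>\<infinity>x\<in>{0::int..}. glue Gm Gp (real_of_int x / real n) * T x)
      = (\<Sum>\<^sub>\<infinity>y\<in>{0..}. Gp (real_of_int y / real n) * T y)" for n :: nat
  proof (rule infsum_cong)
    fix x :: int assume "x \<in> {0..}"
    hence "\<not> real_of_int x / real n < 0" by (simp add: not_less)
    thus "glue Gm Gp (real_of_int x / real n) * T x = Gp (real_of_int x / real n) * T x"
      by (simp add: glue_def)
  qed
  have E2: "(\<Sum>\<^sub>\<infinity>x\<in>{..(-1::int)}. glue Gm Gp (real_of_int x / real n) *
          (\<Sum>\<^sub>\<infinity>r\<in>{..x}. real_of_int r * p_gamma \<gamma> r))
      = - (\<Sum>\<^sub>\<infinity>y\<in>{0..}. Gm ((- real_of_int y - 1) / real n) * T y)" if "n \<ge> 1" for n :: nat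
  proof -
    have e: "{..(-1::int)} = (\<lambda>y. -y-1) ` {0..}"
    proof (auto simp: image_iff)
      fix x :: int assume "x \<le> -1"
      thus "\<exists>xa\<in>{0..}. x = - xa - 1" by (intro bexI[of _ "-x-1"]) auto
    qed
    have inj: "inj_on (\<lambda>y::int. -y-1) {0..}" by (auto simp: inj_on_def)
    have "(\<Sum>\<^sub>\<infinity>x\<in>{..(-1::int)}. glue Gm Gp (real_of_int x / real n) *
          (\<Sum>\<^sub>\<infinity>r\<in>{..x}. real_of_int r * p_gamma \<gamma> r))
        = (\<Sum>\<^sub>\<infinity>y\<in>{0..}. - (Gm ((- real_of_int y - 1) / real n) * T y))"
      unfolding e infsum_reindex[OF inj]
    proof (rule infsum_cong)
      fix y :: int assume "y \<in> {0..}"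
      hence "(- real_of_int y - 1) / real n < 0" using that
        by (simp add: divide_neg_pos)
      thus "((\<lambda>x. glue Gm Gp (real_of_int x / real n) *
          (\<Sum>\<^sub>\<infinity>r\<in>{..x}. real_of_int r * p_gamma \<gamma> r)) \<circ> (\<lambda>y. -y-1)) y
          = - (Gm ((- real_of_int y - 1) / real n) * T y)"
        by (simp add: glue_def neg_tail T_def add.commute)
    qed
    also have "\<dots> = - (\<Sum>\<^sub>\<infinity>y\<in>{0..}. Gm ((- real_of_int y - 1) / real n) * T y)"
      by (rule infsum_uminus)
    finally show ?thesis .
  qed
  have L: "(\<lambda>n. deriv Gp 0 * (\<Sum>\<^sub>\<infinity>y\<in>{0..}. Gp (real_of_int y / real n) * T y)
      + deriv Gm 0 * - (\<Sum>\<^sub>\<infinity>y\<in>{0..}. Gm ((- real_of_int y - 1) / real n) * T y))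
      \<longlonglongrightarrow> deriv Gp 0 * (Gp 0 * M) + deriv Gm 0 * - (Gm 0 * M)"
    by (intro tendsto_intros L1 L2)
  have eq: "deriv Gp 0 * (Gp 0 * M) + deriv Gm 0 * - (Gm 0 * M) = kappa_gamma \<gamma> / alpha_hat \<alpha> \<gamma> * (deriv Gp 0)^2"
  proof (cases "ah = 0")
    case True thus ?thesis using rob by (simp add: ah_def)
  next
    case False thus ?thesis unfolding kM ah_def[symmetric] rob
      by (simp add: field_simps power2_eq_square)
  qed
  show ?thesis
    unfolding eq[symmetric]
  proof (rule Lim_transform_eventually[OF L])
    show "\<forall>\<^sub>F n in sequentially. deriv Gp 0 * (\<Sum>\<^sub>\<infinity>y\<in>{0..}. Gp (real_of_int y / real n) * T y)
      + deriv Gm 0 * - (\<Sum>\<^sub>\<infinity>y\<in>{0..}. Gm ((- real_of_int y - 1) / real n) * T y) =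
      deriv Gp 0 * (\<Sum>\<^sub>\<infinity>x\<in>{0::int..}. glue Gm Gp (real_of_int x / real n) *
          (\<Sum>\<^sub>\<infinity>r\<in>{x+1..}. real_of_int r * p_gamma \<gamma> r))
    + deriv Gm 0 * (\<Sum>\<^sub>\<infinity>x\<in>{..(-1::int)}. glue Gm Gp (real_of_int x / real n) *
          (\<Sum>\<^sub>\<infinity>r\<in>{..x}. real_of_int r * p_gamma \<gamma> r))"
      unfolding eventually_sequentially
      by (rule exI[of _ 1]) (auto simp: E1[unfolded T_def] E2 T_def)
  qed
qed

end
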